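(* Let $\varepsilon>0$ be a constant, let $k\geq 5$ be a constant integer, and let $G=(V,E)$ be a graph on $n$ vertices with $\delta(G)\geq\left(\frac12+\varepsilon\right)n$. Let $D$ be the random digraph in which each vertex $x\in V$ independently chooses a uniformly random set of $k$ distinct $G$-neighbors $y$ and includes the arcs $(x,y)$; then, independently for each vertex $x$, one of its $k$ out-arcs is chosen uniformly at random and colored blue, and the other $k-1$ are colored green. Let $\Gamma^g$ be the undirected graph on $V$ whose edges are the pairs $\{x,y\}$ such that $(x,y)$ or $(y,x)$ is a green arc. Then there exists $\alpha>0$ such that, with high probability, for every longest path $P$ in $\Gamma^g$ and every endpoint $x$ of $P$, $|EP(P,x)|>\alpha n$.
   Context: Rotations: if $P=(v_1,\dots,v_\ell)$ is a longest path in a graph $H$ and $\{v_\ell,v_t\}\in E(H)$ with $t\neq \ell-1$, then $P'=(v_1,\dots,v_t,v_\ell,v_{\ell-1},\dots,v_{t+1})$ is also a longest path of $H$ with endpoint $v_1$. Starting from $P$ and repeatedly applying such rotations to $P$ and to all paths so created, always keeping the endpoint $x=v_1$ fixed, one obtains a collection of longest paths; $EP(P,x)$ denotes the set of their other endpoints. "With high probability" means with probability tending to $1$ as $n\to\infty$ (over both the choices and the coloring). *)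

theory Defs
  imports "HOL-Probability.Probability"
begin

definition nbhd :: "(nat \<Rightarrow> nat \<Rightarrow> bool) \<Rightarrow> nat \<Rightarrow> nat \<Rightarrow> nat set" where
  "nbhd E n x = {y. y < n \<and> E x y}"

definition simple_graph :: "(nat \<Rightarrow> nat \<Rightarrow> bool) \<Rightarrow> nat \<Rightarrow> bool" where
  "simple_graph E n \<longleftrightarrow> (\<forall>x<n. \<forall>y<n. E x y \<longleftrightarrow> E y x) \<and> (\<forall>x<n. \<not> E x x)"

definition min_degree_at_least :: "(nat \<Rightarrow> nat \<Rightarrow> bool) \<Rightarrow> nat \<Rightarrow> real \<Rightarrow> bool" where
  "min_degree_at_least E n d \<longleftrightarrow> (\<forall>x<n. real (card (nbhd E n x)) \<ge> d)"

text \<open>Random choice of one vertex: a uniform k-set S of G-neighbours (the out-arcs),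
  then a uniform element b of S (the blue arc); the others S - {b} are green.\<close>

definition vertex_choice :: "(nat \<Rightarrow> nat \<Rightarrow> bool) \<Rightarrow> nat \<Rightarrow> nat \<Rightarrow> nat \<Rightarrow> (nat set \<times> nat) pmf" where
  "vertex_choice E n k x =
     pmf_of_set {S. S \<subseteq> nbhd E n x \<and> card S = k}
       \<bind> (\<lambda>S. map_pmf (\<lambda>b. (S, b)) (pmf_of_set S))"

definition random_D :: "(nat \<Rightarrow> nat \<Rightarrow> bool) \<Rightarrow> nat \<Rightarrow> nat \<Rightarrow> (nat \<Rightarrow> nat set \<times> nat) pmf" where
  "random_D E n k = Pi_pmf {..<n} ({}, 0) (vertex_choice E n k)"

definition green_graph :: "(nat \<Rightarrow> nat set \<times> nat) \<Rightarrow> nat \<Rightarrow> nat \<Rightarrow> bool" where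
  "green_graph \<omega> x y \<longleftrightarrow>
     y \<in> fst (\<omega> x) - {snd (\<omega> x)} \<or> x \<in> fst (\<omega> y) - {snd (\<omega> y)}"

definition is_path :: "(nat \<Rightarrow> nat \<Rightarrow> bool) \<Rightarrow> nat \<Rightarrow> nat list \<Rightarrow> bool" where
  "is_path H n xs \<longleftrightarrow> xs \<noteq> [] \<and> distinct xs \<and> set xs \<subseteq> {..<n} \<and>
     (\<forall>i. Suc i < length xs \<longrightarrow> H (xs ! i) (xs ! Suc i))"

definition longest_path :: "(nat \<Rightarrow> nat \<Rightarrow> bool) \<Rightarrow> nat \<Rightarrow> nat list \<Rightarrow> bool" where
  "longest_path H n xs \<longleftrightarrow> is_path H n xs \<and> (\<forall>ys. is_path H n ys \<longrightarrow> length ys \<le> length xs)"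

text \<open>Rotation with fixed first endpoint: P = v_1..v_l, edge {v_l, v_t}, t \<noteq> l-1
  (0-indexed: i = t-1, i+2 < l), giving v_1..v_t, v_l, v_(l-1), ..., v_(t+1).\<close>

definition rotation :: "(nat \<Rightarrow> nat \<Rightarrow> bool) \<Rightarrow> nat list \<Rightarrow> nat list \<Rightarrow> bool" where
  "rotation H xs ys \<longleftrightarrow> (\<exists>i. i + 2 < length xs \<and> H (last xs) (xs ! i) \<and>
       ys = take (Suc i) xs @ rev (drop (Suc i) xs))"

text \<open>EP(P, hd P): other endpoints of all paths obtained from P by repeated rotations.\<close>

definition EP :: "(nat \<Rightarrow> nat \<Rightarrow> bool) \<Rightarrow> nat list \<Rightarrow> nat set" where
  "EP H P = last ` {Q. (rotation H)\<^sup>*\<^sup>* P Q}"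

end

theory Submission
  imports Defs
begin

definition qadj :: "nat list \<Rightarrow> nat \<Rightarrow> nat \<Rightarrow> bool" where
  "qadj Q a b \<longleftrightarrow> (\<exists>j. Suc j < length Q \<and> ((Q!j = a \<and> Q!Suc j = b) \<or> (Q!j = b \<and> Q!Suc j = a)))"

lemma rot_len: "length (take (Suc i) xs @ rev (drop (Suc i) xs)) = length xs"
  by simp

lemma rot_nth:
  assumes "i + 2 < length xs" "j < length xs"
  shows "(take (Suc i) xs @ rev (drop (Suc i) xs)) ! j = (if j \<le> i then xs ! j else xs ! (length xs + i - j))"
proof (cases "j \<le> i")
  case True
  then show ?thesis using assms by (simp add: nth_append)
next
  case False
  then have "(take (Suc i) xs @ rev (drop (Suc i) xs)) ! j = rev (drop (Suc i) xs) ! (j - Suc i)"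
    using assms by (simp add: nth_append)
  also have "\<dots> = drop (Suc i) xs ! (length xs - Suc i - 1 - (j - Suc i))"
    using assms False by (simp add: rev_nth)
  also have "\<dots> = xs ! (Suc i + (length xs - Suc i - 1 - (j - Suc i)))"
    using assms False by (simp add: nth_drop)
  also have "Suc i + (length xs - Suc i - 1 - (j - Suc i)) = length xs + i - j"
    using assms False by arith
  finally show ?thesis using False by simp
qed

lemma rot_set: "set (take (Suc i) xs @ rev (drop (Suc i) xs)) = set xs"
  by (metis append_take_drop_id set_append set_rev)

lemma rot_distinct: "distinct xs \<Longrightarrow> distinct (take (Suc i) xs @ rev (drop (Suc i) xs))"
  by (metis append_take_drop_id distinct_append distinct_rev set_rev)

lemma rot_hd:
  assumes "i + 2 < length xs"
  shows "(take (Suc i) xs @ rev (drop (Suc i) xs)) ! 0 = xs ! 0"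
proof -
  have "0 < length xs" using assms by linarith
  then show ?thesis using rot_nth[OF assms, of 0] by simp
qed

lemma rot_last:
  assumes "i + 2 < length xs"
  shows "last (take (Suc i) xs @ rev (drop (Suc i) xs)) = xs ! Suc i"
proof -
  have "last (take (Suc i) xs @ rev (drop (Suc i) xs)) = (take (Suc i) xs @ rev (drop (Suc i) xs)) ! (length xs - 1)"
    using assms by (subst last_conv_nth) auto
  also have "\<dots> = xs ! (length xs + i - (length xs - 1))"
  proof -
    have "\<not> (length xs - 1 \<le> i)" "length xs - 1 < length xs" using assms by linarith+
    then show ?thesis using rot_nth[OF assms, of "length xs - 1"] by simp
  qed
  also have "length xs + i - (length xs - 1) = Suc i" using assms by simp
  finally show ?thesis .
qed

lemma rot_path:
  assumes sym: "\<And>x y. H x y = H y x" and p: "is_path H n xs" and i: "i + 2 < length xs"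
    and e: "H (last xs) (xs ! i)"
  shows "is_path H n (take (Suc i) xs @ rev (drop (Suc i) xs))" (is "is_path H n ?ys")
proof -
  have L: "length ?ys = length xs" by simp
  have "H (?ys ! j) (?ys ! Suc j)" if j: "Suc j < length ?ys" for j
  proof -
    have pe: "\<And>t. Suc t < length xs \<Longrightarrow> H (xs ! t) (xs ! Suc t)" using p by (simp add: is_path_def)
    consider "Suc j \<le> i" | "j = i" | "j > i" by linarith
    then show ?thesis
    proof cases
      case 1
      then show ?thesis using rot_nth[OF i, of j] rot_nth[OF i, of "Suc j"] j pe[of j] by simp
    next
      case 2
      have "last xs = xs ! (length xs - 1)" using i by (subst last_conv_nth) auto
      then show ?thesis using rot_nth[OF i, of j] rot_nth[OF i, of "Suc j"] j 2 e sym
        by (simp add: Suc_diff_Suc)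
    next
      case 3
      have a: "?ys ! j = xs ! (length xs + i - j)" using rot_nth[OF i, of j] j 3 by simp
      have b: "?ys ! Suc j = xs ! (length xs + i - Suc j)" using rot_nth[OF i, of "Suc j"] j 3 by simp
      have c: "length xs + i - j = Suc (length xs + i - Suc j)" using j 3 by simp
      show ?thesis using a b c pe[of "length xs + i - Suc j"] sym j 3 by simp
    qed
  qed
  then show ?thesis using p rot_set[of i xs] rot_distinct[of xs i] i
    by (auto simp: is_path_def)
qed

lemma rot_qadj:
  assumes i: "i + 2 < length xs" and q: "qadj xs a b" and na: "a \<noteq> xs ! Suc i" and nb: "b \<noteq> xs ! Suc i"
  shows "qadj (take (Suc i) xs @ rev (drop (Suc i) xs)) a b" (is "qadj ?ys a b")
proof -
  obtain t where t: "Suc t < length xs" and ab: "(xs!t = a \<and> xs!Suc t = b) \<or> (xs!t = b \<and> xs!Suc t = a)"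
    using q by (auto simp: qadj_def)
  have "t \<noteq> i" using ab na nb by auto
  then consider "t < i" | "t > i" by linarith
  then show ?thesis
  proof cases
    case 1
    have "?ys ! t = xs ! t" "?ys ! Suc t = xs ! Suc t"
      using rot_nth[OF i, of t] rot_nth[OF i, of "Suc t"] 1 t by auto
    then show ?thesis unfolding qadj_def using t ab by (intro exI[of _ t]) simp
  next
    case 2
    define j where "j = length xs + i - Suc t"
    have j1: "Suc j < length xs" using 2 t i by (simp add: j_def)
    have nj: "\<not> j \<le> i" "j < length xs" using 2 t j1 by (simp_all add: j_def)
    have "?ys ! j = xs ! (length xs + i - j)" using rot_nth[OF i, of j] nj by simp
    also have "length xs + i - j = Suc t" using 2 t by (simp add: j_def)
    finally have "?ys ! j = xs ! Suc t" .
    moreover have "?ys ! Suc j = xs ! t"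
    proof -
      have nj2: "\<not> Suc j \<le> i" using nj by simp
      have "?ys ! Suc j = xs ! (length xs + i - Suc j)" using rot_nth[OF i, of "Suc j"] nj2 j1 by simp
      also have "length xs + i - Suc j = t" using 2 t j1 by (simp add: j_def)
      finally show ?thesis .
    qed
    ultimately show ?thesis unfolding qadj_def using j1 ab by (intro exI[of _ j]) auto
  qed
qed

lemma longest_path_rot:
  assumes sym: "\<And>x y. H x y = H y x" and lp: "longest_path H n xs" and r: "rotation H xs ys"
  shows "longest_path H n ys \<and> length ys = length xs \<and> set ys = set xs \<and> ys ! 0 = xs ! 0"
proof -
  obtain i where i: "i + 2 < length xs" and e: "H (last xs) (xs ! i)"
    and ys: "ys = take (Suc i) xs @ rev (drop (Suc i) xs)"
    using r by (auto simp: rotation_def)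
  have "is_path H n ys" using rot_path[OF sym _ i e] lp ys by (auto simp: longest_path_def)
  then show ?thesis using lp ys rot_set[of i xs] rot_hd[OF i] by (auto simp: longest_path_def)
qed

lemma rot_invariant:
  assumes sym: "\<And>x y. H x y = H y x" and lp: "longest_path H n P"
    and r: "(rotation H)\<^sup>*\<^sup>* P Q"
  shows "longest_path H n Q \<and> length Q = length P \<and> set Q = set P \<and> Q ! 0 = P ! 0 \<and>
     (\<forall>a b. qadj P a b \<and> a \<notin> EP H P \<and> b \<notin> EP H P \<longrightarrow> qadj Q a b)"
  using r
proof (induction rule: rtranclp_induct)
  case base
  then show ?case using lp by simp
next
  case (step Q Q')
  have IH: "longest_path H n Q" "length Q = length P" "set Q = set P" "Q ! 0 = P ! 0"
     "\<And>a b. qadj P a b \<Longrightarrow> a \<notin> EP H P \<Longrightarrow> b \<notin> EP H P \<Longrightarrow> qadj Q a b"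
    using step.IH by auto
  obtain i where i: "i + 2 < length Q" and e: "H (last Q) (Q ! i)"
    and ys: "Q' = take (Suc i) Q @ rev (drop (Suc i) Q)"
    using step.hyps(2) by (auto simp: rotation_def)
  have reach: "(rotation H)\<^sup>*\<^sup>* P Q'" using step.hyps by simp
  have "last Q' \<in> EP H P" unfolding EP_def using reach by blast
  then have lq: "Q ! Suc i \<in> EP H P" using rot_last[OF i] ys by simp
  have "qadj Q' a b" if "qadj P a b" "a \<notin> EP H P" "b \<notin> EP H P" for a b
    using rot_qadj[OF i IH(5)[OF that]] that lq ys by auto
  then show ?case using longest_path_rot[OF sym IH(1) step.hyps(2)] IH by auto
qed

lemma qadj_nb:
  assumes d: "distinct Q" and j: "j < length Q" and w: "Q ! j = w" and q: "qadj Q w x"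
  shows "x = Q ! Suc j \<or> (j > 0 \<and> x = Q ! (j - 1))"
proof -
  obtain t where t: "Suc t < length Q" and ab: "(Q!t = w \<and> Q!Suc t = x) \<or> (Q!t = x \<and> Q!Suc t = w)"
    using q by (auto simp: qadj_def)
  show ?thesis
  proof (cases "Q ! t = w")
    case True
    then have "t = j" using d j t w nth_eq_iff_index_eq by fastforce
    then show ?thesis using ab True d t by (auto simp: nth_eq_iff_index_eq)
  next
    case False
    then have "Q ! Suc t = w" "Q ! t = x" using ab by auto
    then have "Suc t = j" using d j t w nth_eq_iff_index_eq by fastforce
    then show ?thesis using \<open>Q ! t = x\<close> by auto
  qed
qed

lemma posa_nbhd:
  assumes sym: "\<And>x y. H x y = H y x" and lp: "longest_path H n P"
    and w: "w < n" "w \<notin> EP H P" and u: "u \<in> EP H P" and uw: "H u w"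
  shows "w \<in> {P ! (m - 1) | m. 0 < m \<and> m < length P \<and> P ! m \<in> EP H P} \<union>
             {P ! Suc m | m. Suc m < length P \<and> P ! m \<in> EP H P}"
proof (rule ccontr)
  let ?R = "EP H P"
  assume nw: "w \<notin> {P ! (m - 1) | m. 0 < m \<and> m < length P \<and> P ! m \<in> ?R} \<union>
             {P ! Suc m | m. Suc m < length P \<and> P ! m \<in> ?R}"
  obtain Q where r: "(rotation H)\<^sup>*\<^sup>* P Q" and uq: "u = last Q" using u by (auto simp: EP_def)
  note inv = rot_invariant[OF sym lp r]
  have Qp: "is_path H n Q" and lQ: "length Q = length P" and sQ: "set Q = set P" and hQ: "Q ! 0 = P ! 0"
    and qa: "\<And>a b. qadj P a b \<Longrightarrow> a \<notin> ?R \<Longrightarrow> b \<notin> ?R \<Longrightarrow> qadj Q a b"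
    using inv by (auto simp: longest_path_def)
  have Pp: "is_path H n P" using lp by (simp add: longest_path_def)
  have Qne: "Q \<noteq> []" and dQ: "distinct Q" using Qp by (auto simp: is_path_def)
  have dP: "distinct P" and Pne: "P \<noteq> []" using Pp by (auto simp: is_path_def)
  have "w \<in> set Q"
  proof (rule ccontr)
    assume "w \<notin> set Q"
    then have "is_path H n (Q @ [w])" using Qp w uw uq Qne
      by (auto simp: is_path_def nth_append last_conv_nth less_Suc_eq) (metis diff_Suc_1 One_nat_def)
    then have "length (Q @ [w]) \<le> length P" using lp by (auto simp: longest_path_def)
    then show False using lQ by simp
  qed
  then obtain j where j: "j < length Q" and qj: "Q ! j = w" by (auto simp: in_set_conv_nth)
  have "w \<noteq> u" using w u by auto
  then have j1: "Suc j < length Q" using j qj uq Qne by (metis Suc_lessI last_conv_nth diff_Suc_1)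
  have sR: "Q ! Suc j \<in> ?R"
  proof (cases "j + 2 < length Q")
    case True
    have "rotation H Q (take (Suc j) Q @ rev (drop (Suc j) Q))"
      unfolding rotation_def using True uw uq qj by auto
    then have "(rotation H)\<^sup>*\<^sup>* P (take (Suc j) Q @ rev (drop (Suc j) Q))" using r by simp
    then have "last (take (Suc j) Q @ rev (drop (Suc j) Q)) \<in> ?R" unfolding EP_def by blast
    then show ?thesis using rot_last[OF True] by simp
  next
    case False
    then have "Suc j = length Q - 1" using j1 by simp
    then show ?thesis using uq u Qne by (simp add: last_conv_nth)
  qed
  from \<open>w \<in> set Q\<close> sQ obtain m where m: "m < length P" and pm: "P ! m = w" by (auto simp: in_set_conv_nth)
  have lastR: "last P \<in> ?R" unfolding EP_def by blast
  have m1: "Suc m < length P"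
  proof (rule ccontr)
    assume "\<not> Suc m < length P"
    then have "m = length P - 1" using m by simp
    then have "w = last P" using pm Pne by (simp add: last_conv_nth)
    then show False using lastR w by simp
  qed
  have nR1: "P ! Suc m \<notin> ?R"
  proof
    assume "P ! Suc m \<in> ?R"
    then have "w \<in> {P ! (m' - 1) | m'. 0 < m' \<and> m' < length P \<and> P ! m' \<in> ?R}"
      using m1 pm by (intro CollectI exI[of _ "Suc m"]) auto
    then show False using nw by blast
  qed
  have "qadj P w (P ! Suc m)" unfolding qadj_def using m1 pm by auto
  then have "qadj Q w (P ! Suc m)" using qa nR1 w by blast
  then have c1: "P ! Suc m = Q ! Suc j \<or> (j > 0 \<and> P ! Suc m = Q ! (j - 1))" using qadj_nb[OF dQ j qj] by blast
  then have j0: "j > 0" and c1': "P ! Suc m = Q ! (j - 1)" using nR1 sR by auto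
  show False
  proof (cases "m = 0")
    case True
    then have "Q ! 0 = Q ! j" using hQ pm qj by simp
    then have "j = 0" using dQ j Qne by (simp add: nth_eq_iff_index_eq)
    then show False using j0 by simp
  next
    case False
    have nR2: "P ! (m - 1) \<notin> ?R"
    proof
      assume "P ! (m - 1) \<in> ?R"
      then have "w \<in> {P ! Suc m' | m'. Suc m' < length P \<and> P ! m' \<in> ?R}"
        using m False pm by (intro CollectI exI[of _ "m - 1"]) auto
      then show False using nw by blast
    qed
    have "qadj P w (P ! (m - 1))" unfolding qadj_def using m pm False
      by (intro exI[of _ "m - 1"]) auto
    then have "qadj Q w (P ! (m - 1))" using qa nR2 w by blast
    then have "P ! (m - 1) = Q ! Suc j \<or> (j > 0 \<and> P ! (m - 1) = Q ! (j - 1))" using qadj_nb[OF dQ j qj] by blast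
    then have "P ! (m - 1) = Q ! (j - 1)" using nR2 sR by auto
    then have "P ! (m - 1) = P ! Suc m" using c1' by simp
    then have "m - 1 = Suc m" using dP m1 by (simp add: nth_eq_iff_index_eq)
    then show False by simp
  qed
qed

definition expands :: "(nat \<Rightarrow> nat \<Rightarrow> bool) \<Rightarrow> nat \<Rightarrow> real \<Rightarrow> bool" where
  "expands H n \<alpha> \<longleftrightarrow> (\<forall>S. S \<subseteq> {..<n} \<and> S \<noteq> {} \<and> real (card S) \<le> \<alpha> * real n \<longrightarrow>
      2 * card S < card {w. w < n \<and> w \<notin> S \<and> (\<exists>u\<in>S. H u w)})"

lemma card_idx_le:
  assumes "distinct P"
  shows "card {m. m < length P \<and> P ! m \<in> R} \<le> card (R \<inter> set P)"
proof (rule card_inj_on_le[where f = "\<lambda>m. P ! m"])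
  show "inj_on ((!) P) {m. m < length P \<and> P ! m \<in> R}"
    using assms by (auto simp: inj_on_def nth_eq_iff_index_eq)
  show "(!) P ` {m. m < length P \<and> P ! m \<in> R} \<subseteq> R \<inter> set P" by auto
  show "finite (R \<inter> set P)" by simp
qed

lemma posa_EP:
  assumes sym: "\<And>x y. H x y = H y x" and ex: "expands H n \<alpha>" and lp: "longest_path H n P"
  shows "real (card (EP H P)) > \<alpha> * real n"
proof (rule ccontr)
  let ?R = "EP H P"
  assume "\<not> real (card ?R) > \<alpha> * real n"
  then have le: "real (card ?R) \<le> \<alpha> * real n" by simp
  have Pp: "is_path H n P" using lp by (simp add: longest_path_def)
  have RP: "?R \<subseteq> set P"
  proof
    fix x assume "x \<in> ?R"
    then obtain Q where r: "(rotation H)\<^sup>*\<^sup>* P Q" and x: "x = last Q" by (auto simp: EP_def)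
    have "set Q = set P" "is_path H n Q" using rot_invariant[OF sym lp r] by (auto simp: longest_path_def)
    then show "x \<in> set P" using x by (metis is_path_def last_in_set)
  qed
  have Rn: "?R \<subseteq> {..<n}" using RP Pp by (auto simp: is_path_def)
  have Rne: "?R \<noteq> {}" unfolding EP_def by blast
  have lt: "2 * card ?R < card {w. w < n \<and> w \<notin> ?R \<and> (\<exists>u\<in>?R. H u w)}"
    using ex Rn Rne le by (auto simp: expands_def)
  let ?A = "{P ! (m - 1) | m. 0 < m \<and> m < length P \<and> P ! m \<in> ?R}"
  let ?B = "{P ! Suc m | m. Suc m < length P \<and> P ! m \<in> ?R}"
  have "{w. w < n \<and> w \<notin> ?R \<and> (\<exists>u\<in>?R. H u w)} \<subseteq> ?A \<union> ?B"
    using posa_nbhd[OF sym lp] by blast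
  have dP: "distinct P" using Pp by (simp add: is_path_def)
  have ci: "card {m. m < length P \<and> P ! m \<in> ?R} \<le> card ?R"
    using card_idx_le[OF dP, of ?R] RP by (simp add: Int_absorb2)
  have fi: "finite {m. m < length P \<and> P ! m \<in> ?R}" by simp
  have "?A \<subseteq> (\<lambda>m. P ! (m - 1)) ` {m. m < length P \<and> P ! m \<in> ?R}" by auto
  then have aA: "card ?A \<le> card ((\<lambda>m. P ! (m - 1)) ` {m. m < length P \<and> P ! m \<in> ?R})"
    using fi by (intro card_mono) auto
  have bA: "card ((\<lambda>m. P ! (m - 1)) ` {m. m < length P \<and> P ! m \<in> ?R}) \<le> card {m. m < length P \<and> P ! m \<in> ?R}"
    using fi by (rule card_image_le)
  have cA: "card ?A \<le> card ?R" using aA bA ci by linarith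
  have "?B \<subseteq> (\<lambda>m. P ! Suc m) ` {m. m < length P \<and> P ! m \<in> ?R}" by auto
  then have aB: "card ?B \<le> card ((\<lambda>m. P ! Suc m) ` {m. m < length P \<and> P ! m \<in> ?R})"
    using fi by (intro card_mono) auto
  have bB: "card ((\<lambda>m. P ! Suc m) ` {m. m < length P \<and> P ! m \<in> ?R}) \<le> card {m. m < length P \<and> P ! m \<in> ?R}"
    using fi by (rule card_image_le)
  have cB: "card ?B \<le> card ?R" using aB bB ci by linarith
  have fA: "finite ?A" by (rule finite_subset[OF \<open>?A \<subseteq> _\<close>]) simp
  have fB: "finite ?B" by (rule finite_subset[OF \<open>?B \<subseteq> _\<close>]) simp
  have "card {w. w < n \<and> w \<notin> ?R \<and> (\<exists>u\<in>?R. H u w)} \<le> card (?A \<union> ?B)"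
    using \<open>_ \<subseteq> ?A \<union> ?B\<close> fA fB by (intro card_mono) auto
  also have "\<dots> \<le> card ?A + card ?B" by (rule card_Un_le)
  finally have "card {w. w < n \<and> w \<notin> ?R \<and> (\<exists>u\<in>?R. H u w)} \<le> 2 * card ?R" using cA cB by simp
  with lt show False by simp
qed

lemma longest_path_rev:
  assumes sym: "\<And>x y. H x y = H y x" and lp: "longest_path H n P"
  shows "longest_path H n (rev P)"
proof -
  have Pp: "is_path H n P" using lp by (simp add: longest_path_def)
  have "H (rev P ! i) (rev P ! Suc i)" if "Suc i < length (rev P)" for i
  proof -
    have "H (P ! (length P - Suc (Suc i))) (P ! Suc (length P - Suc (Suc i)))"
      using Pp that by (simp add: is_path_def)
    moreover have "Suc (length P - Suc (Suc i)) = length P - Suc i" using that by simp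
    ultimately show ?thesis using that sym by (simp add: rev_nth)
  qed
  then have "is_path H n (rev P)" using Pp by (auto simp: is_path_def)
  then show ?thesis using lp by (simp add: longest_path_def)
qed

lemma measure_bind_pmf_of_set:
  assumes K: "finite K" "K \<noteq> {}"
  shows "measure_pmf.prob (pmf_of_set K \<bind> f) A = (\<Sum>S\<in>K. measure_pmf.prob (f S) A) / card K"
proof -
  have "emeasure (measure_pmf (pmf_of_set K \<bind> f)) A = (\<integral>\<^sup>+S. emeasure (f S) A \<partial>measure_pmf (pmf_of_set K))"
    by simp
  also have "\<dots> = (\<Sum>S\<in>K. emeasure (f S) A) / card K"
    using K by (simp add: nn_integral_pmf_of_set)
  also have "\<dots> = (\<Sum>S\<in>K. ennreal (measure_pmf.prob (f S) A)) / ennreal (real (card K))"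
    by (simp add: measure_pmf.emeasure_eq_measure ennreal_of_nat_eq_real_of_nat)
  also have "\<dots> = ennreal ((\<Sum>S\<in>K. measure_pmf.prob (f S) A) / real (card K))"
  proof -
    have "(\<Sum>S\<in>K. ennreal (measure_pmf.prob (f S) A)) = ennreal (\<Sum>S\<in>K. measure_pmf.prob (f S) A)"
      by (rule sum_ennreal) simp
    then show ?thesis using K by (simp add: divide_ennreal sum_nonneg card_gt_0_iff)
  qed
  finally show ?thesis
    by (simp add: measure_pmf.emeasure_eq_measure sum_nonneg divide_nonneg_nonneg)
qed

definition greenin :: "nat \<Rightarrow> nat set \<Rightarrow> (nat set \<times> nat) set" where
  "greenin n T = {p. \<forall>y\<in>fst p - {snd p}. y < n \<longrightarrow> y \<in> T}"

lemma count_pairs: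
  assumes fN: "finite N" and k: "k = Suc j"
  shows "card (SIGMA S:{S. S \<subseteq> N \<and> card S = k}. {b \<in> S. S - {b} \<subseteq> T})
           \<le> card N * (card (N \<inter> T) choose j)"
proof -
  let ?K = "{S. S \<subseteq> N \<and> card S = k}"
  let ?G = "{G. G \<subseteq> N \<inter> T \<and> card G = j}"
  have "card (SIGMA S:?K. {b \<in> S. S - {b} \<subseteq> T}) \<le> card (N \<times> ?G)"
  proof (rule card_inj_on_le[where f = "\<lambda>(S, b). (b, S - {b})"])
    show "inj_on (\<lambda>(S, b). (b, S - {b})) (SIGMA S:?K. {b \<in> S. S - {b} \<subseteq> T})"
      by (auto simp: inj_on_def)
    show "(\<lambda>(S, b). (b, S - {b})) ` (SIGMA S:?K. {b \<in> S. S - {b} \<subseteq> T}) \<subseteq> N \<times> ?G"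
    proof
      fix p assume "p \<in> (\<lambda>(S, b). (b, S - {b})) ` (SIGMA S:?K. {b \<in> S. S - {b} \<subseteq> T})"
      then obtain S b where p: "p = (b, S - {b})" and S: "S \<subseteq> N" "card S = k" and b: "b \<in> S" "S - {b} \<subseteq> T"
        by auto
      have "finite S" using S fN finite_subset by blast
      then show "p \<in> N \<times> ?G" using p S b k by auto
    qed
    show "finite (N \<times> ?G)" using fN by auto
  qed
  also have "card (N \<times> ?G) = card N * (card (N \<inter> T) choose j)"
  proof -
    have "card ?G = card (N \<inter> T) choose j" using fN by (intro n_subsets) simp
    then show ?thesis by (simp add: card_cartesian_product)
  qed
  finally show ?thesis .
qed

lemma vertex_prob:
  assumes fN: "nbhd E n x = N" and k: "k = Suc j" and dk: "k \<le> card N"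
  shows "measure_pmf.prob (vertex_choice E n k x) (greenin n T)
           \<le> real (card (N \<inter> T) choose j) / real ((card N - 1) choose j)"
proof -
  have fN': "finite N" using fN by (auto simp: nbhd_def)
  have Nn: "N \<subseteq> {..<n}" using fN by (auto simp: nbhd_def)
  let ?K = "{S. S \<subseteq> N \<and> card S = k}"
  have fK: "finite ?K" using fN' by simp
  have cK: "card ?K = card N choose k" using fN' by (simp add: n_subsets)
  have Kne: "?K \<noteq> {}" using cK dk by (metis card.empty zero_less_binomial not_gr0)
  have pS: "measure_pmf.prob (map_pmf (\<lambda>b. (S, b)) (pmf_of_set S)) (greenin n T)
      = real (card {b \<in> S. S - {b} \<subseteq> T}) / real k" if S: "S \<in> ?K" for S
  proof -
    have fS: "finite S" and Sne: "S \<noteq> {}" using S fN' finite_subset k by auto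
    have "(\<lambda>b. (S, b)) -` greenin n T \<inter> S = {b \<in> S. S - {b} \<subseteq> T}"
      using S Nn by (auto simp: greenin_def)
    then show ?thesis using fS Sne S by (simp add: measure_pmf_of_set Int_commute)
  qed
  have "measure_pmf.prob (vertex_choice E n k x) (greenin n T)
      = (\<Sum>S\<in>?K. measure_pmf.prob (map_pmf (\<lambda>b. (S, b)) (pmf_of_set S)) (greenin n T)) / card ?K"
    unfolding vertex_choice_def fN by (rule measure_bind_pmf_of_set[OF fK Kne])
  also have "(\<Sum>S\<in>?K. measure_pmf.prob (map_pmf (\<lambda>b. (S, b)) (pmf_of_set S)) (greenin n T))
      = (\<Sum>S\<in>?K. real (card {b \<in> S. S - {b} \<subseteq> T}) / real k)"
    by (intro sum.cong refl pS)
  also have "(\<Sum>S\<in>?K. real (card {b \<in> S. S - {b} \<subseteq> T}) / real k)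
     = (\<Sum>S\<in>?K. real (card {b \<in> S. S - {b} \<subseteq> T})) / real k"
    by (simp add: sum_divide_distrib)
  also have "(\<Sum>S\<in>?K. real (card {b \<in> S. S - {b} \<subseteq> T})) = real (card (SIGMA S:?K. {b \<in> S. S - {b} \<subseteq> T}))"
  proof -
    have "\<And>S. S \<in> ?K \<Longrightarrow> finite {b \<in> S. S - {b} \<subseteq> T}"
      using fN' by (metis (no_types, lifting) mem_Collect_eq finite_subset rev_finite_subset mem_Collect_eq subsetI)
    then show ?thesis using fK by (simp add: card_SigmaI)
  qed
  also have "\<dots> \<le> real (card N * (card (N \<inter> T) choose j))"
    using count_pairs[OF fN' k, of T] by (simp only: of_nat_le_iff)
  finally have le: "measure_pmf.prob (vertex_choice E n k x) (greenin n T)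
      \<le> real (card N * (card (N \<inter> T) choose j)) / real k / real (card N choose k)"
    using cK by (simp add: divide_right_mono)
  have "k * (card N choose k) = card N * ((card N - 1) choose j)"
    using k dk Suc_times_binomial[of j "card N - 1"] by (cases "card N") auto
  then have "real k * real (card N choose k) = real (card N) * real ((card N - 1) choose j)"
    by (metis of_nat_mult)
  moreover have "card N > 0" using dk k by simp
  moreover have "((card N - 1) choose j) > 0" using dk k by simp
  ultimately have "real (card N * (card (N \<inter> T) choose j)) / real k / real (card N choose k)
       = real (card (N \<inter> T) choose j) / real ((card N - 1) choose j)"
    by (simp add: field_simps)
  with le show ?thesis by simp
qed

lemma binrec: "Suc k * (n choose Suc k) = (n - k) * (n choose k)"
  by (metis binomial_absorption binomial_absorb_comp)

lemma binom_ratio: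
  assumes "m \<le> D"
  shows "real (m choose j) * real D ^ j \<le> real (D choose j) * real m ^ j"
proof (induction j)
  case 0
  then show ?case by simp
next
  case (Suc j)
  have key: "real (m - j) * real D \<le> real (D - j) * real m"
  proof (cases "j \<le> m")
    case True
    then have "real (m - j) = real m - real j" "real (D - j) = real D - real j" using assms by auto
    moreover have "real j * real m \<le> real j * real D" using assms by (intro mult_left_mono) auto
    ultimately show ?thesis by (simp add: algebra_simps)
  next
    case False
    then show ?thesis by simp
  qed
  have e1: "real (Suc j) * real (m choose Suc j) = real (m - j) * real (m choose j)"
    using binrec[of j m] by (metis of_nat_mult)
  have e2: "real (Suc j) * real (D choose Suc j) = real (D - j) * real (D choose j)"
    using binrec[of j D] by (metis of_nat_mult)
  have "real (Suc j) * (real (m choose Suc j) * real D ^ Suc j)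
      = (real (Suc j) * real (m choose Suc j)) * (real D ^ j * real D)"
    by (simp only: power_Suc mult_ac)
  also have "\<dots> = (real (m choose j) * real D ^ j) * (real (m - j) * real D)"
    unfolding e1 by (simp only: mult_ac)
  also have "\<dots> \<le> (real (D choose j) * real m ^ j) * (real (m - j) * real D)"
    using Suc.IH by (intro mult_right_mono) auto
  also have "\<dots> \<le> (real (D choose j) * real m ^ j) * (real (D - j) * real m)"
    using key by (intro mult_left_mono) auto
  also have "\<dots> = (real (Suc j) * real (D choose Suc j)) * (real m ^ j * real m)"
    unfolding e2 by (simp only: mult_ac)
  also have "\<dots> = real (Suc j) * (real (D choose Suc j) * real m ^ Suc j)"
    by (simp only: power_Suc mult_ac)
  finally show ?case by (simp only: mult_le_cancel_left_pos of_nat_0_less_iff zero_less_Suc)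
qed

lemma binom_ratio':
  assumes "m \<le> D" "j \<le> D" "D > 0"
  shows "real (m choose j) / real (D choose j) \<le> (real m / real D) ^ j"
proof -
  have p: "real (D choose j) > 0" using assms by simp
  have "real D ^ j > 0" using assms by simp
  then show ?thesis using binom_ratio[OF assms(1), of j] p
    by (simp add: divide_le_eq power_divide field_simps)
qed

lemma fact_lower: "real s ^ s \<le> exp (real s) * fact s"
proof -
  have "real s ^ s / fact s \<le> exp (real s)"
  proof -
    have "(\<lambda>n. real s ^ n /\<^sub>R fact n) sums exp (real s)" by (rule exp_converges)
    then have "sum (\<lambda>n. real s ^ n /\<^sub>R fact n) {s} \<le> exp (real s)"
      by (intro sum_le_suminf[of _ "{s}", THEN order_trans]) (auto simp: sums_iff)
    then show ?thesis by (simp add: divide_inverse_commute)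
  qed
  then show ?thesis by (simp add: divide_le_eq mult.commute)
qed

lemma vertex_bound:
  assumes dx: "real (card (nbhd E n x)) \<ge> real n / 2"
    and k: "k = Suc j" and j: "j \<ge> 4" and nk: "real n \<ge> 4 * real k + 4"
    and T: "card T \<le> 3 * s" and fT: "finite T" and s: "12 * real s \<le> real n"
  shows "measure_pmf.prob (vertex_choice E n k x) (greenin n T) \<le> (12 * real s / real n) ^ 4"
proof -
  define N where "N = nbhd E n x"
  define d where "d = card N"
  have fN: "finite N" by (simp add: N_def nbhd_def)
  have dn: "real d \<ge> real n / 2" using dx by (simp add: d_def N_def)
  have npos: "real n > 0" using nk by simp
  have d1: "real (d - 1) \<ge> real n / 4" using dn nk by (simp add: of_nat_diff)
  have dk: "k \<le> d" using dn nk by linarith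
  have "card (N \<inter> T) \<le> card T" using fT by (intro card_mono) auto
  then have m: "card (N \<inter> T) \<le> 3 * s" using T by linarith
  have mD: "card (N \<inter> T) \<le> d - 1" using m s d1 by linarith
  have jD: "j \<le> d - 1" using dk k by simp
  have D0: "d - 1 > 0" using dk k j by simp
  have "measure_pmf.prob (vertex_choice E n k x) (greenin n T)
      \<le> real (card (N \<inter> T) choose j) / real ((d - 1) choose j)"
    using vertex_prob[OF N_def[symmetric] k] dk by (simp add: d_def)
  also have "\<dots> \<le> (real (card (N \<inter> T)) / real (d - 1)) ^ j"
    by (rule binom_ratio'[OF mD jD D0])
  also have "\<dots> \<le> (real (card (N \<inter> T)) / real (d - 1)) ^ 4"
  proof (rule power_decreasing[OF j])
    show "0 \<le> real (card (N \<inter> T)) / real (d - 1)" by simp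
    show "real (card (N \<inter> T)) / real (d - 1) \<le> 1" using mD D0 by simp
  qed
  also have "\<dots> \<le> (12 * real s / real n) ^ 4"
  proof (rule power_mono)
    show "0 \<le> real (card (N \<inter> T)) / real (d - 1)" by simp
    have "real (card (N \<inter> T)) \<le> 3 * real s" using m by linarith
    then have "real (card (N \<inter> T)) / real (d - 1) \<le> 3 * real s / (real n / 4)"
      using d1 npos by (intro frac_le) auto
    also have "\<dots> = 12 * real s / real n" by simp
    finally show "real (card (N \<inter> T)) / real (d - 1) \<le> 12 * real s / real n" .
  qed
  finally show ?thesis .
qed

definition badev :: "nat \<Rightarrow> nat set \<Rightarrow> nat set \<Rightarrow> (nat \<Rightarrow> nat set \<times> nat) set" where
  "badev n S T = {\<omega>. \<forall>x\<in>S. \<omega> x \<in> greenin n T}"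

lemma bad_bound:
  assumes deg: "\<And>x. x < n \<Longrightarrow> real (card (nbhd E n x)) \<ge> real n / 2"
    and k: "k = Suc j" and j: "j \<ge> 4" and nk: "real n \<ge> 4 * real k + 4"
    and T: "card T \<le> 3 * s" and fT: "finite T" and s: "12 * real s \<le> real n"
    and S: "S \<subseteq> {..<n}" "card S = s"
  shows "measure_pmf.prob (random_D E n k) (badev n S T) \<le> ((12 * real s / real n) ^ 4) ^ s"
proof -
  define B where "B = (\<lambda>x. if x \<in> S then greenin n T else UNIV)"
  have "badev n S T = Pi {..<n} B"
    using S by (auto simp: badev_def B_def Pi_def)
  then have "measure_pmf.prob (random_D E n k) (badev n S T)
     = (\<Prod>x\<in>{..<n}. measure_pmf.prob (vertex_choice E n k x) (B x))"
    unfolding random_D_def by (simp add: measure_Pi_pmf_Pi)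
  also have "\<dots> = (\<Prod>x\<in>S. measure_pmf.prob (vertex_choice E n k x) (greenin n T))"
  proof -
    have "(\<Prod>x\<in>{..<n}. measure_pmf.prob (vertex_choice E n k x) (B x))
       = (\<Prod>x\<in>S. measure_pmf.prob (vertex_choice E n k x) (B x))"
      using S by (intro prod.mono_neutral_right) (auto simp: B_def)
    then show ?thesis by (simp add: B_def)
  qed
  also have "\<dots> \<le> (\<Prod>x\<in>S. (12 * real s / real n) ^ 4)"
    using S by (intro prod_mono conjI vertex_bound[OF _ k j nk T fT s] deg) auto
  also have "\<dots> = ((12 * real s / real n) ^ 4) ^ s" using S by simp
  finally show ?thesis .
qed

lemma binom_fact_le: "real (n choose s) * fact s \<le> real n ^ s"
proof (cases "s \<le> n")
  case True
  have e: "fact n = (fact s * (n choose s)) * fact (n - s)"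
    using binomial_fact_lemma[OF True] by (simp add: mult_ac)
  have "fact s * (n choose s) = fact n div fact (n - s)"
    by (subst e) simp
  also have "\<dots> \<le> n ^ s" by (rule fact_div_fact_le_pow[OF True])
  finally have "fact s * (n choose s) \<le> n ^ s" .
  then have "real (fact s * (n choose s)) \<le> real (n ^ s)" by (simp only: of_nat_le_iff)
  then show ?thesis by (simp add: mult.commute)
next
  case False
  then show ?thesis by (simp add: binomial_eq_0)
qed

lemma binom_le_div: "real (n choose s) \<le> real n ^ s / fact s"
  using binom_fact_le[of n s] by (simp add: le_divide_eq)

lemma fact_lower': "fact s \<ge> real s ^ s / exp (real s)"
  using fact_lower[of s] by (simp add: divide_le_eq mult.commute)

lemma pow_div_fact_le: "real n ^ s / fact s \<le> (real n * exp 1 / real s) ^ s"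
proof (cases "s = 0")
  case True then show ?thesis by simp
next
  case False
  have sp: "real s ^ s / exp (real s) > 0" using False by simp
  have "real n ^ s / fact s \<le> real n ^ s / (real s ^ s / exp (real s))"
  proof -
    have fp: "fact s > (0::real)" by simp
    have "0 < fact s * (real s ^ s / exp (real s))" using mult_pos_pos[OF fp sp] .
    then show ?thesis using fact_lower'[of s] sp by (intro divide_left_mono) auto
  qed
  also have "\<dots> = (real n * exp 1 / real s) ^ s"
  proof -
    have ee: "exp 1 ^ s = exp (real s)" using exp_of_nat_mult[of s "1::real"] by simp
    have "(real n * exp 1 / real s) ^ s = real n ^ s * exp (real s) / real s ^ s"
      by (simp add: power_divide power_mult_distrib ee)
    then show ?thesis by simp
  qed
  finally show ?thesis .
qed

definition cc :: real where "cc = 12 ^ 4 * exp 3 / 4"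

lemma cc_pos: "cc \<ge> 1"
proof -
  have "exp 3 \<ge> (1::real)" by simp
  then have "1 \<le> 5184 * exp (3::real)" by linarith
  then show ?thesis unfolding cc_def by simp
qed

lemma term_bound:
  assumes s: "s \<ge> 1" and n: "n > 0"
  shows "real (n choose s) * real (n choose (2 * s)) * ((12 * real s / real n) ^ 4) ^ s
     \<le> (cc * real s / real n) ^ s"
proof -
  have a: "real (n choose s) \<le> (real n * exp 1 / real s) ^ s"
    using binom_le_div pow_div_fact_le order_trans by blast
  have b: "real (n choose (2 * s)) \<le> (real n * exp 1 / real (2 * s)) ^ (2 * s)"
    using binom_le_div pow_div_fact_le order_trans by blast
  have "real (n choose s) * real (n choose (2 * s)) * ((12 * real s / real n) ^ 4) ^ s
     \<le> (real n * exp 1 / real s) ^ s * (real n * exp 1 / real (2 * s)) ^ (2 * s) * ((12 * real s / real n) ^ 4) ^ s"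
    using a b by (intro mult_right_mono mult_mono) auto
  also have "\<dots> = ((real n * exp 1 / real s) * (real n * exp 1 / real (2 * s)) ^ 2 * (12 * real s / real n) ^ 4) ^ s"
    by (simp only: power_mult power_mult_distrib)
  also have "(real n * exp 1 / real s) * (real n * exp 1 / real (2 * s)) ^ 2 * (12 * real s / real n) ^ 4
      = cc * real s / real n"
  proof -
    have ee: "exp 1 ^ 3 = exp (3::real)" using exp_of_nat_mult[of 3 "1::real"] by simp
    have alg: "\<And>e s n :: real. s > 0 \<Longrightarrow> n > 0 \<Longrightarrow>
       (n * e / s) * (n * e / (2 * s)) ^ 2 * (12 * s / n) ^ 4 = 12 ^ 4 * e ^ 3 / 4 * s / n"
      by (simp add: field_simps eval_nat_numeral)
    have "(real n * exp 1 / real s) * (real n * exp 1 / real (2 * s)) ^ 2 * (12 * real s / real n) ^ 4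
       = 12 ^ 4 * exp 1 ^ 3 / 4 * real s / real n"
      using alg[of "real s" "real n" "exp 1"] s n by simp
    then show ?thesis unfolding cc_def ee by simp
  qed
  finally show ?thesis .
qed

lemma sum_bound:
  assumes M: "4 * cc * real M \<le> real n" and n: "n > 0"
  shows "(\<Sum>s\<in>{1..M}. (cc * real s / real n) ^ s) \<le> 2 * cc / real n"
proof -
  have t: "(cc * real s / real n) ^ s \<le> (cc / real n) * (1/2) ^ (s - 1)" if "s \<in> {1..M}" for s
  proof -
    have s1: "s \<ge> 1" "s \<le> M" using that by auto
    have "cc * real s \<le> cc * real M" using s1 cc_pos by (intro mult_left_mono) auto
    then have "cc * real s \<le> real n / 4" using M by linarith
    then have q: "cc * real s / real n \<le> 1/4" using n by (simp add: divide_le_eq)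
    have q0: "cc * real s / real n \<ge> 0" using cc_pos by simp
    have "(cc * real s / real n) ^ s = (cc * real s / real n) * (cc * real s / real n) ^ (s - 1)"
      using s1 by (metis power_eq_if not_one_le_zero)
    also have "\<dots> \<le> (cc * real s / real n) * (1/4) ^ (s - 1)"
      using q q0 by (intro mult_left_mono power_mono) auto
    also have "\<dots> = (cc / real n) * (real s * (1/4) ^ (s - 1))" by simp
    also have "real s * (1/4) ^ (s - 1) \<le> (1/2) ^ (s - 1)"
    proof -
      have "real s \<le> 2 ^ (s - 1)"
      proof -
        have "s \<le> 2 ^ (s - 1)" using s1
        proof (induction s rule: nat_induct_at_least)
          case base then show ?case by simp
        next
          case (Suc m) then show ?case by (cases m) auto
        qed
        then show ?thesis by (metis of_nat_le_iff of_nat_numeral of_nat_power)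
      qed
      then have "real s * (1/4) ^ (s - 1) \<le> 2 ^ (s - 1) * (1/4) ^ (s - 1)" by (intro mult_right_mono) auto
      also have "\<dots> = (1/2) ^ (s - 1)" by (simp add: power_mult_distrib[symmetric])
      finally show ?thesis .
    qed
    then have "(cc / real n) * (real s * (1/4) ^ (s - 1)) \<le> (cc / real n) * (1/2) ^ (s - 1)"
      using cc_pos by (intro mult_left_mono) auto
    finally show ?thesis .
  qed
  have "(\<Sum>s\<in>{1..M}. (cc * real s / real n) ^ s) \<le> (\<Sum>s\<in>{1..M}. (cc / real n) * (1/2) ^ (s - 1))"
    by (intro sum_mono t)
  also have "\<dots> = (cc / real n) * (\<Sum>i<M. (1/2::real) ^ i)"
  proof -
    have "(\<Sum>s\<in>{1..M}. (1/2::real) ^ (s - 1)) = (\<Sum>i<M. (1/2::real) ^ i)"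
    proof (induction M)
      case 0 then show ?case by simp
    next
      case (Suc M) then show ?case by (simp add: sum.atLeast1_atMost_eq)
    qed
    moreover have "(\<Sum>s\<in>{1..M}. (cc / real n) * (1/2::real) ^ (s - 1)) = (cc / real n) * (\<Sum>s\<in>{1..M}. (1/2::real) ^ (s - 1))"
      by (rule sum_distrib_left[symmetric])
    ultimately show ?thesis by metis
  qed
  also have "(\<Sum>i<M. (1/2::real) ^ i) \<le> 2"
    by (simp add: sum_gp_strict)
  then have "(cc / real n) * (\<Sum>i<M. (1/2::real) ^ i) \<le> (cc / real n) * 2"
    using cc_pos by (intro mult_left_mono) auto
  finally show ?thesis by (simp add: mult.commute)
qed

lemma cc_ge3: "cc \<ge> 3"
proof -
  have "exp 3 \<ge> (1::real)" by simp
  then have "3 \<le> 5184 * exp (3::real)" by linarith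
  then show ?thesis unfolding cc_def by simp
qed

lemma green_sym: "green_graph \<omega> x y = green_graph \<omega> y x"
  by (auto simp: green_graph_def)

lemma cover:
  assumes "\<not> expands (green_graph \<omega>) n \<alpha>" and al: "\<alpha> \<ge> 0" and hn: "4 * \<alpha> \<le> 1"
  shows "\<omega> \<in> (\<Union>s\<in>{1..nat \<lfloor>\<alpha> * real n\<rfloor>}. \<Union>S\<in>{S. S \<subseteq> {..<n} \<and> card S = s}.
            \<Union>U\<in>{U. U \<subseteq> {..<n} \<and> card U = 2 * s}. badev n S (S \<union> U))"
proof -
  obtain S where S: "S \<subseteq> {..<n}" "S \<noteq> {}" "real (card S) \<le> \<alpha> * real n"
    and nc: "\<not> 2 * card S < card {w. w < n \<and> w \<notin> S \<and> (\<exists>u\<in>S. green_graph \<omega> u w)}"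
    using assms(1) unfolding expands_def by blast
  define s where "s = card S"
  define N' where "N' = {w. w < n \<and> w \<notin> S \<and> (\<exists>u\<in>S. green_graph \<omega> u w)}"
  have fS: "finite S" using S finite_subset by blast
  have s1: "s \<ge> 1" using fS S(2) by (simp add: s_def Suc_le_eq card_gt_0_iff)
  have sM: "s \<le> nat \<lfloor>\<alpha> * real n\<rfloor>" using S(3) by (simp add: s_def le_nat_floor)
  have "\<alpha> * real n \<le> (1/4) * real n" using hn by (intro mult_right_mono) auto
  then have "real s \<le> real n / 4" using S(3) s_def by linarith
  then have s2n: "2 * s \<le> n" by linarith
  have N'n: "N' \<subseteq> {..<n}" by (auto simp: N'_def)
  have cN: "card N' \<le> 2 * s" using nc by (simp add: N'_def s_def)
  obtain U where U: "N' \<subseteq> U" "U \<subseteq> {..<n}" "card U = 2 * s"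
    using exists_subset_between[of N' "2 * s" "{..<n}"] cN s2n N'n by auto
  have "\<omega> \<in> badev n S (S \<union> U)"
    unfolding badev_def greenin_def
  proof (intro CollectI ballI impI)
    fix x y assume x: "x \<in> S" and y: "y \<in> fst (\<omega> x) - {snd (\<omega> x)}" and yn: "y < n"
    have "green_graph \<omega> x y" using y by (simp add: green_graph_def)
    then have "y \<in> S \<or> y \<in> N'" using x yn by (auto simp: N'_def)
    then show "y \<in> S \<union> U" using U by auto
  qed
  then show ?thesis using s1 sM S(1) U(2,3)
    by (intro UN_I[of s] UN_I[of S] UN_I[of U]) (auto simp: s_def)
qed

lemma bad_prob:
  assumes deg: "\<And>x. x < n \<Longrightarrow> real (card (nbhd E n x)) \<ge> real n / 2"
    and k: "k = Suc j" and j: "j \<ge> 4" and nk: "real n \<ge> 4 * real k + 4"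
  shows "measure_pmf.prob (random_D E n k) {\<omega>. \<not> expands (green_graph \<omega>) n (1 / (4 * cc))}
           \<le> 2 * cc / real n"
proof -
  define \<alpha> where "\<alpha> = 1 / (4 * cc)"
  define M where "M = nat \<lfloor>\<alpha> * real n\<rfloor>"
  let ?p = "random_D E n k"
  let ?Ss = "\<lambda>s. {S. S \<subseteq> {..<n} \<and> card S = s}"
  let ?Us = "\<lambda>s. {U. U \<subseteq> {..<n} \<and> card U = 2 * s}"
  have npos: "n > 0" using nk by simp
  have ccp: "cc > 0" using cc_ge3 by simp
  have al: "\<alpha> \<ge> 0" "4 * \<alpha> \<le> 1" using cc_ge3 by (auto simp: \<alpha>_def field_simps)
  have Mle: "real M \<le> \<alpha> * real n" unfolding M_def
    using al by (simp add: of_nat_floor zero_le_mult_iff)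
  have sbound: "12 * real s \<le> real n" if "s \<in> {1..M}" for s
  proof -
    have "real s \<le> \<alpha> * real n" using that Mle by (meson atLeastAtMost_iff of_nat_le_iff order_trans)
    also have "\<dots> \<le> real n / 12" using mult_right_mono[OF cc_ge3, of "real n"] ccp
      by (simp add: \<alpha>_def field_simps)
    finally show ?thesis by simp
  qed
  have "measure_pmf.prob ?p {\<omega>. \<not> expands (green_graph \<omega>) n \<alpha>}
      \<le> measure_pmf.prob ?p (\<Union>s\<in>{1..M}. \<Union>S\<in>?Ss s. \<Union>U\<in>?Us s. badev n S (S \<union> U))"
    using cover[OF _ al] unfolding M_def by (intro measure_pmf.finite_measure_mono) auto
  also have "\<dots> \<le> (\<Sum>s\<in>{1..M}. measure_pmf.prob ?p (\<Union>S\<in>?Ss s. \<Union>U\<in>?Us s. badev n S (S \<union> U)))"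
    by (rule measure_UNION_le) auto
  also have "\<dots> \<le> (\<Sum>s\<in>{1..M}. real (n choose s) * real (n choose (2 * s)) * ((12 * real s / real n) ^ 4) ^ s)"
  proof (rule sum_mono)
    fix s assume s: "s \<in> {1..M}"
    have fSs: "finite (?Ss s)" by (rule finite_subset[of _ "Pow {..<n}"]) auto
    have fUs: "finite (?Us s)" by (rule finite_subset[of _ "Pow {..<n}"]) auto
    have "measure_pmf.prob ?p (\<Union>S\<in>?Ss s. \<Union>U\<in>?Us s. badev n S (S \<union> U))
        \<le> (\<Sum>S\<in>?Ss s. measure_pmf.prob ?p (\<Union>U\<in>?Us s. badev n S (S \<union> U)))"
      using fSs by (rule measure_UNION_le) auto
    also have "\<dots> \<le> (\<Sum>S\<in>?Ss s. \<Sum>U\<in>?Us s. measure_pmf.prob ?p (badev n S (S \<union> U)))"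
      using fUs by (intro sum_mono measure_UNION_le) auto
    also have "\<dots> \<le> (\<Sum>S\<in>?Ss s. \<Sum>U\<in>?Us s. ((12 * real s / real n) ^ 4) ^ s)"
    proof (intro sum_mono)
      fix S U assume S: "S \<in> ?Ss s" and U: "U \<in> ?Us s"
      have fS: "finite S" "finite U" using S U finite_subset by auto
      have "card (S \<union> U) \<le> card S + card U" by (rule card_Un_le)
      then have cT: "card (S \<union> U) \<le> 3 * s" using S U by simp
      show "measure_pmf.prob ?p (badev n S (S \<union> U)) \<le> ((12 * real s / real n) ^ 4) ^ s"
        using bad_bound[OF deg k j nk cT _ sbound[OF s]] S fS by auto
    qed
    also have "\<dots> = real (n choose s) * real (n choose (2 * s)) * ((12 * real s / real n) ^ 4) ^ s"
      by (simp add: n_subsets)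
    finally show "measure_pmf.prob ?p (\<Union>S\<in>?Ss s. \<Union>U\<in>?Us s. badev n S (S \<union> U))
        \<le> real (n choose s) * real (n choose (2 * s)) * ((12 * real s / real n) ^ 4) ^ s" .
  qed
  also have "\<dots> \<le> (\<Sum>s\<in>{1..M}. (cc * real s / real n) ^ s)"
    using npos by (intro sum_mono term_bound) auto
  also have "\<dots> \<le> 2 * cc / real n"
  proof (rule sum_bound[OF _ npos])
    show "4 * cc * real M \<le> real n" using Mle ccp
      by (simp add: \<alpha>_def field_simps)
  qed
  finally show ?thesis unfolding \<alpha>_def .
qed

theorem lemma6:
  fixes \<epsilon> :: real and k :: nat
  assumes "\<epsilon> > 0" and "k \<ge> 5"
  shows "\<exists>\<alpha>>0. \<forall>\<delta>>0. \<exists>N. \<forall>n\<ge>N. \<forall>E.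
           simple_graph E n \<and> min_degree_at_least E n ((1/2 + \<epsilon>) * real n) \<longrightarrow>
           measure_pmf.prob (random_D E n k)
             {\<omega>. \<forall>P. longest_path (green_graph \<omega>) n P \<longrightarrow>
                  real (card (EP (green_graph \<omega>) P)) > \<alpha> * real n \<and>
                  real (card (EP (green_graph \<omega>) (rev P))) > \<alpha> * real n}
           \<ge> 1 - \<delta>"
proof -
  obtain j where k: "k = Suc j" and j: "j \<ge> 4" using assms(2)
    by (metis Suc_le_D Suc_le_mono eval_nat_numeral(3) numeral_Bit1 numeral_One)
  define \<alpha> where "\<alpha> = 1 / (4 * cc)"
  have ccp: "cc > 0" using cc_ge3 by simp
  have "\<forall>\<delta>>0. \<exists>N. \<forall>n\<ge>N. \<forall>E.
           simple_graph E n \<and> min_degree_at_least E n ((1/2 + \<epsilon>) * real n) \<longrightarrow>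
           measure_pmf.prob (random_D E n k)
             {\<omega>. \<forall>P. longest_path (green_graph \<omega>) n P \<longrightarrow>
                  real (card (EP (green_graph \<omega>) P)) > \<alpha> * real n \<and>
                  real (card (EP (green_graph \<omega>) (rev P))) > \<alpha> * real n}
           \<ge> 1 - \<delta>"
  proof (intro allI impI)
    fix \<delta> :: real assume dp: "\<delta> > 0"
    define N where "N = nat \<lceil>2 * cc / \<delta> + 4 * real k + 5\<rceil>"
    show "\<exists>N. \<forall>n\<ge>N. \<forall>E.
           simple_graph E n \<and> min_degree_at_least E n ((1/2 + \<epsilon>) * real n) \<longrightarrow>
           measure_pmf.prob (random_D E n k)
             {\<omega>. \<forall>P. longest_path (green_graph \<omega>) n P \<longrightarrow>
                  real (card (EP (green_graph \<omega>) P)) > \<alpha> * real n \<and>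
                  real (card (EP (green_graph \<omega>) (rev P))) > \<alpha> * real n}
           \<ge> 1 - \<delta>"
    proof (intro exI[of _ N] allI impI)
      fix n E assume nN: "n \<ge> N" and G: "simple_graph E n \<and> min_degree_at_least E n ((1/2 + \<epsilon>) * real n)"
      have "real n \<ge> real N" using nN by simp
      moreover have "real N \<ge> 2 * cc / \<delta> + 4 * real k + 5" unfolding N_def by linarith
      ultimately have nb: "real n \<ge> 2 * cc / \<delta> + 4 * real k + 5" by linarith
      have cd: "2 * cc / \<delta> \<ge> 0" using ccp dp by simp
      have nk: "real n \<ge> 4 * real k + 4" using nb cd by linarith
      have npos: "real n > 0" using nk by simp
      have deg: "real (card (nbhd E n x)) \<ge> real n / 2" if "x < n" for x
      proof -
        have "real (card (nbhd E n x)) \<ge> (1/2 + \<epsilon>) * real n"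
          using G that by (simp add: min_degree_at_least_def)
        moreover have "(1/2 + \<epsilon>) * real n \<ge> real n / 2" using assms(1) npos by (simp add: algebra_simps)
        ultimately show ?thesis by linarith
      qed
      let ?p = "random_D E n k"
      let ?Ex = "{\<omega>. expands (green_graph \<omega>) n \<alpha>}"
      let ?G = "{\<omega>. \<forall>P. longest_path (green_graph \<omega>) n P \<longrightarrow>
                  real (card (EP (green_graph \<omega>) P)) > \<alpha> * real n \<and>
                  real (card (EP (green_graph \<omega>) (rev P))) > \<alpha> * real n}"
      have sub: "?Ex \<subseteq> ?G"
      proof
        fix \<omega> assume "\<omega> \<in> ?Ex"
        then have ex: "expands (green_graph \<omega>) n \<alpha>" by simp
        show "\<omega> \<in> ?G"
          using posa_EP[OF green_sym ex] longest_path_rev[of "green_graph \<omega>", OF green_sym] by blast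
      qed
      have bp: "measure_pmf.prob ?p {\<omega>. \<not> expands (green_graph \<omega>) n \<alpha>} \<le> 2 * cc / real n"
        unfolding \<alpha>_def by (rule bad_prob[OF deg k j nk])
      have "2 * cc / real n \<le> \<delta>"
      proof -
        have "2 * cc / \<delta> \<le> real n" using nb by linarith
        then have "2 * cc \<le> real n * \<delta>" using dp by (simp add: divide_le_eq)
        then show ?thesis using npos by (simp add: divide_le_eq mult.commute)
      qed
      have "{\<omega>. \<not> expands (green_graph \<omega>) n \<alpha>} = space (measure_pmf ?p) - ?Ex" by auto
      moreover have "measure_pmf.prob ?p (space (measure_pmf ?p) - ?Ex) = 1 - measure_pmf.prob ?p ?Ex"
        by (rule measure_pmf.prob_compl) simp
      ultimately have "measure_pmf.prob ?p {\<omega>. \<not> expands (green_graph \<omega>) n \<alpha>} = 1 - measure_pmf.prob ?p ?Ex"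
        by simp
      then have "measure_pmf.prob ?p ?Ex \<ge> 1 - \<delta>" using bp \<open>2 * cc / real n \<le> \<delta>\<close> by linarith
      moreover have "measure_pmf.prob ?p ?Ex \<le> measure_pmf.prob ?p ?G"
        using sub by (intro measure_pmf.finite_measure_mono) auto
      ultimately show "measure_pmf.prob ?p ?G \<ge> 1 - \<delta>" by linarith
    qed
  qed
  moreover have "\<alpha> > 0" using ccp by (simp add: \<alpha>_def)
  ultimately show ?thesis by blast
qed

end
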